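(* For every program $\Omega$ with weight constraints, $\Omega$ and its translation $[\Omega]$ (a program with nested expressions) have the same answer sets.
   Context: Programs with nested expressions. A literal is a propositional atom $a$ or its classical negation $\neg a$; a set of literals is consistent if it contains no pair $a,\neg a$. Elementary formulas are literals, $\bot$ and $\top$. Formulas are built from elementary formulas using the unary connective $\mathit{not}$ (negation as failure) and the binary connectives "," (conjunction) and ";" (disjunction). A rule with nested expressions has the form $\mathit{Head}\leftarrow \mathit{Body}$ where $\mathit{Head},\mathit{Body}$ are formulas (a formula $F$ alone stands for $F\leftarrow\top$); a program with nested expressions is a set of such rules. For a consistent set $Z$ of literals: $Z\models l$ iff $l\in Z$ for a literal $l$; $Z\models\top$; $Z\not\models\bot$; $Z\models(F,G)$ iff $Z\models F$ and $Z\models G$; $Z\models(F;G)$ iff $Z\models F$ or $Z\models G$; $Z\models \mathit{not}\,F$ iff $Z\not\models F$. $Z$ satisfies a program if for every rule, $Z\models\mathit{Body}$ implies $Z\models\mathit{Head}$. The reduct $F^Z$: $F^Z=F$ for elementary $F$; $(F,G)^Z=F^Z,G^Z$; $(F;G)^Z=F^Z;G^Z$; $(\mathit{not}\,F)^Z=\bot$ if $Z\models F$ and $\top$ otherwise. $\Pi^Z$ is the set of rules $\mathit{Head}^Z\leftarrow\mathit{Body}^Z$ for the rules of $\Pi$. A consistent set $Z$ is an answer set of a program without $\mathit{not}$ if it is a minimal (under inclusion) consistent set of literals satisfying it; $Z$ is an answer set of an arbitrary program $\Pi$ if $Z$ is an answer set of $\Pi^Z$. Abbreviation: for formulas $F_1,\dots,F_n$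 and a set $X$ of subsets of $\{1,\dots,n\}$, $\langle F_1,\dots,F_n\rangle:X$ denotes the disjunction (;) over all $I\in X$ of the conjunctions (,) of the $F_i$, $i\in I$; the empty conjunction is $\top$ and the empty disjunction is $\bot$. Programs with weight constraints. A rule element is a literal $l$ (positive) or $\mathit{not}\ l$ (negative); $Z\models c$ for a rule element is as for formulas. A weight constraint is $L\le\{c_1=w_1,\dots,c_m=w_m\}\le U$ where $L,U$ are real numbers or $\pm\infty$, $c_1,\dots,c_m$ ($m\ge0$) are rule elements and $w_1,\dots,w_m$ are nonnegative reals; $L\le S$ abbreviates $L\le S\le+\infty$ and $S\le U$ abbreviates $-\infty\le S\le U$. A rule with weight constraints is $C_0\leftarrow C_1,\dots,C_n$ ($n\ge0$) with weight constraints $C_i$; the rule elements of $C_0$ are its head elements. A program with weight constraints is a set of such rules. A literal $c$ is identified with the constraint $1\le\{c=1\}$. A consistent set $Z$ of literals satisfies the weight constraint above if $L\le\sum_{j:Z\models c_j}w_j\le U$, and satisfies a program $\Omega$ if for every rule, whenever $Z$ satisfies $C_1,\dots,C_n$ it satisfies $C_0$. The reduct $(L\le S)^Z$ of $L\le S$ is $L^Z\le S'$ where $S'$ is obtained from $S$ by dropping all pairs $c=w$ with $c$ negative, and $L^Z$ is $L$ minus the sum of the weights $w$ of the pairs $c=w$ in $S$ with $c$ negative and $Z\models c$. The reduct of a rule $L_0\le S_0\le U_0\leftarrow L_1\le S_1\le U_1,\dots,L_n\le S_n\le U_n$ w.r.t. $Z$ is, if $Z\models S_i\le U_i$ for all $1\le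 i\le n$, the set of rules $l\leftarrow (L_1\le S_1)^Z,\dots,(L_n\le S_n)^Z$ for all positive head elements $l$ with $Z\models l$; otherwise it is empty. $\Omega^Z$ is the union of the reducts of the rules of $\Omega$. Such a program (literal heads, bodies of the form $L\le S$ with only positive elements) has a unique minimal set of literals satisfying it, its deductive closure $\mathit{cl}(\Omega^Z)$. A consistent set $Z$ of literals is an answer set of $\Omega$ if $Z\models\Omega$ and $\mathit{cl}(\Omega^Z)=Z$. Translation. For $S=\{c_1=w_1,\dots,c_m=w_m\}$ and real $w$: $[w\le S]=\langle c_1,\dots,c_m\rangle:\{I\subseteq\{1,\dots,m\}: w\le\sum_{i\in I}w_i\}$, $[w<S]=\langle c_1,\dots,c_m\rangle:\{I: w<\sum_{i\in I}w_i\}$, $[S\le U]=\mathit{not}\,[U<S]$, and $[L\le S\le U]=[L\le S],[S\le U]$. For a program $\Omega$ with weight constraints, $[\Omega]$ is obtained by replacing each rule $C_0\leftarrow C_1,\dots,C_n$ with $(l_1;\mathit{not}\,l_1),\dots,(l_p;\mathit{not}\,l_p),[C_0]\leftarrow[C_1],\dots,[C_n]$, where $l_1,\dots,l_p$ are the positive head elements of the rule. *)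

theory Defs
  imports Complex_Main "HOL-Library.Extended_Real"
begin

(* A literal is an atom a or its classical negation \<not>a *)
datatype 'a lit = Pos 'a | Neg 'a

definition consistent :: "'a lit set \<Rightarrow> bool" where
  "consistent Z \<longleftrightarrow> (\<forall>a. \<not> (Pos a \<in> Z \<and> Neg a \<in> Z))"

datatype 'a form =
    FLit "'a lit"
  | FBot
  | FTop
  | FNot "'a form"
  | FConj "'a form" "'a form"
  | FDisj "'a form" "'a form"

fun fsat :: "'a lit set \<Rightarrow> 'a form \<Rightarrow> bool" where
  "fsat Z (FLit l) = (l \<in> Z)"
| "fsat Z FBot = False"
| "fsat Z FTop = True"
| "fsat Z (FNot F) = (\<not> fsat Z F)"
| "fsat Z (FConj F G) = (fsat Z F \<and> fsat Z G)"
| "fsat Z (FDisj F G) = (fsat Z F \<or> fsat Z G)"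

(* a rule Head <- Body is a pair (Head, Body) *)
type_synonym 'a nrule = "'a form \<times> 'a form"
type_synonym 'a nprog = "'a nrule set"

definition nsat :: "'a lit set \<Rightarrow> 'a nprog \<Rightarrow> bool" where
  "nsat Z P \<longleftrightarrow> (\<forall>(H, B) \<in> P. fsat Z B \<longrightarrow> fsat Z H)"

fun freduct :: "'a lit set \<Rightarrow> 'a form \<Rightarrow> 'a form" where
  "freduct Z (FLit l) = FLit l"
| "freduct Z FBot = FBot"
| "freduct Z FTop = FTop"
| "freduct Z (FConj F G) = FConj (freduct Z F) (freduct Z G)"
| "freduct Z (FDisj F G) = FDisj (freduct Z F) (freduct Z G)"
| "freduct Z (FNot F) = (if fsat Z F then FBot else FTop)"

definition nreduct :: "'a nprog \<Rightarrow> 'a lit set \<Rightarrow> 'a nprog" where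
  "nreduct P Z = (\<lambda>(H, B). (freduct Z H, freduct Z B)) ` P"

definition nested_answer_set :: "'a nprog \<Rightarrow> 'a lit set \<Rightarrow> bool" where
  "nested_answer_set P Z \<longleftrightarrow>
     consistent Z \<and> nsat Z (nreduct P Z) \<and>
     (\<forall>Y. Y \<subset> Z \<longrightarrow> consistent Y \<longrightarrow> \<not> nsat Y (nreduct P Z))"

fun conj_list :: "'a form list \<Rightarrow> 'a form" where
  "conj_list [] = FTop"
| "conj_list [F] = F"
| "conj_list (F # Fs) = FConj F (conj_list Fs)"

fun disj_list :: "'a form list \<Rightarrow> 'a form" where
  "disj_list [] = FBot"
| "disj_list [F] = F"
| "disj_list (F # Fs) = FDisj F (disj_list Fs)"

(* <F_1,...,F_n> : X, with X given as a list of index lists (indices 0-based) *)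
definition angle :: "'a form list \<Rightarrow> nat list list \<Rightarrow> 'a form" where
  "angle Fs X = disj_list (map (\<lambda>I. conj_list (map (\<lambda>i. Fs ! i) I)) X)"

(* rule element: literal l (positive) or  not l (negative) *)
datatype 'a elem = PosE "'a lit" | NegE "'a lit"

fun esat :: "'a lit set \<Rightarrow> 'a elem \<Rightarrow> bool" where
  "esat Z (PosE l) = (l \<in> Z)"
| "esat Z (NegE l) = (l \<notin> Z)"

record 'a wc =
  lower :: ereal
  elems :: "('a elem \<times> real) list"
  upper :: ereal

(* a rule C_0 <- C_1, ..., C_n *)
type_synonym 'a wrule = "'a wc \<times> 'a wc list"
type_synonym 'a wprog = "'a wrule set"

definition wc_wf :: "'a wc \<Rightarrow> bool" where
  "wc_wf C \<longleftrightarrow> (\<forall>p \<in> set (elems C). 0 \<le> snd p)"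

definition wprog_wf :: "'a wprog \<Rightarrow> bool" where
  "wprog_wf \<Omega> \<longleftrightarrow> (\<forall>(C0, Cs) \<in> \<Omega>. wc_wf C0 \<and> (\<forall>C \<in> set Cs. wc_wf C))"

definition wsum :: "'a lit set \<Rightarrow> ('a elem \<times> real) list \<Rightarrow> real" where
  "wsum Z S = sum_list (map snd (filter (\<lambda>p. esat Z (fst p)) S))"

definition wcsat :: "'a lit set \<Rightarrow> 'a wc \<Rightarrow> bool" where
  "wcsat Z C \<longleftrightarrow> lower C \<le> ereal (wsum Z (elems C)) \<and> ereal (wsum Z (elems C)) \<le> upper C"

definition wsat :: "'a lit set \<Rightarrow> 'a wprog \<Rightarrow> bool" where
  "wsat Z \<Omega> \<longleftrightarrow> (\<forall>(C0, Cs) \<in> \<Omega>. (\<forall>C \<in> set Cs. wcsat Z C) \<longrightarrow> wcsat Z C0)"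

fun is_pos_elem :: "'a elem \<Rightarrow> bool" where
  "is_pos_elem (PosE l) = True"
| "is_pos_elem (NegE l) = False"

fun elem_lit :: "'a elem \<Rightarrow> 'a lit" where
  "elem_lit (PosE l) = l"
| "elem_lit (NegE l) = l"

(* reduced constraint  L' <= S'  with only positive elements: (L', [(l, w), ...]) *)
type_synonym 'a lc = "ereal \<times> ('a lit \<times> real) list"
(* reduced rule  l <- body *)
type_synonym 'a rrule = "'a lit \<times> 'a lc list"

definition lc_reduct :: "'a lit set \<Rightarrow> 'a wc \<Rightarrow> 'a lc" where
  "lc_reduct Z C =
     (lower C - ereal (sum_list (map snd (filter (\<lambda>p. \<not> is_pos_elem (fst p) \<and> esat Z (fst p)) (elems C)))),
      map (\<lambda>p. (elem_lit (fst p), snd p)) (filter (\<lambda>p. is_pos_elem (fst p)) (elems C)))"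

definition pos_lits :: "'a wc \<Rightarrow> 'a lit list" where
  "pos_lits C = map (\<lambda>p. elem_lit (fst p)) (filter (\<lambda>p. is_pos_elem (fst p)) (elems C))"

definition wreduct :: "'a wprog \<Rightarrow> 'a lit set \<Rightarrow> 'a rrule set" where
  "wreduct \<Omega> Z =
     (\<Union>(C0, Cs) \<in> \<Omega>.
        if (\<forall>C \<in> set Cs. ereal (wsum Z (elems C)) \<le> upper C)
        then {(l, map (lc_reduct Z) Cs) | l. l \<in> set (pos_lits C0) \<and> l \<in> Z}
        else {})"

definition lcsat :: "'a lit set \<Rightarrow> 'a lc \<Rightarrow> bool" where
  "lcsat X c \<longleftrightarrow> fst c \<le> ereal (sum_list (map snd (filter (\<lambda>p. fst p \<in> X) (snd c))))"

definition rsat :: "'a lit set \<Rightarrow> 'a rrule set \<Rightarrow> bool" where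
  "rsat X R \<longleftrightarrow> (\<forall>(l, cs) \<in> R. (\<forall>c \<in> set cs. lcsat X c) \<longrightarrow> l \<in> X)"

definition cl :: "'a rrule set \<Rightarrow> 'a lit set" where
  "cl R = \<Inter> {X. rsat X R}"

definition weight_answer_set :: "'a wprog \<Rightarrow> 'a lit set \<Rightarrow> bool" where
  "weight_answer_set \<Omega> Z \<longleftrightarrow> consistent Z \<and> wsat Z \<Omega> \<and> cl (wreduct \<Omega> Z) = Z"

definition elem_form :: "'a elem \<Rightarrow> 'a form" where
  "elem_form c = (case c of PosE l \<Rightarrow> FLit l | NegE l \<Rightarrow> FNot (FLit l))"

definition index_subsets :: "nat \<Rightarrow> nat list list" where
  "index_subsets m = subseqs [0..<m]"

definition tr_ge :: "ereal \<Rightarrow> ('a elem \<times> real) list \<Rightarrow> 'a form" where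
  "tr_ge w S = angle (map (elem_form \<circ> fst) S)
      (filter (\<lambda>I. w \<le> ereal (\<Sum>i\<leftarrow>I. snd (S ! i))) (index_subsets (length S)))"

definition tr_gt :: "ereal \<Rightarrow> ('a elem \<times> real) list \<Rightarrow> 'a form" where
  "tr_gt w S = angle (map (elem_form \<circ> fst) S)
      (filter (\<lambda>I. w < ereal (\<Sum>i\<leftarrow>I. snd (S ! i))) (index_subsets (length S)))"

definition tr_wc :: "'a wc \<Rightarrow> 'a form" where
  "tr_wc C = FConj (tr_ge (lower C) (elems C)) (FNot (tr_gt (upper C) (elems C)))"

definition tr_rule :: "'a wrule \<Rightarrow> 'a nrule" where
  "tr_rule r = (case r of (C0, Cs) \<Rightarrow>
     (conj_list (map (\<lambda>l. FDisj (FLit l) (FNot (FLit l))) (pos_lits C0) @ [tr_wc C0]),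
      conj_list (map tr_wc Cs)))"

definition translate :: "'a wprog \<Rightarrow> 'a nprog" where
  "translate \<Omega> = tr_rule ` \<Omega>"

end

theory Submission
  imports Defs "HOL-Library.Sublist"
begin

lemma conj_list_red: "freduct Z (conj_list Fs) = conj_list (map (freduct Z) Fs)"
  by (induction Fs rule: conj_list.induct) auto
lemma disj_list_red: "freduct Z (disj_list Fs) = disj_list (map (freduct Z) Fs)"
  by (induction Fs rule: disj_list.induct) auto
lemma conj_list_sat: "fsat Y (conj_list Fs) \<longleftrightarrow> (\<forall>F\<in>set Fs. fsat Y F)"
  by (induction Fs rule: conj_list.induct) auto
lemma disj_list_sat: "fsat Y (disj_list Fs) \<longleftrightarrow> (\<exists>F\<in>set Fs. fsat Y F)"
  by (induction Fs rule: disj_list.induct) auto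
lemma fsat_red: "fsat Z (freduct Z F) = fsat Z F"
  by (induction F) auto

fun esat2 :: "'a lit set \<Rightarrow> 'a lit set \<Rightarrow> 'a elem \<Rightarrow> bool" where
  "esat2 Y Z (PosE l) = (l \<in> Y)"
| "esat2 Y Z (NegE l) = (l \<notin> Z)"

definition wsum2 :: "'a lit set \<Rightarrow> 'a lit set \<Rightarrow> ('a elem \<times> real) list \<Rightarrow> real" where
  "wsum2 Y Z S = sum_list (map snd (filter (\<lambda>p. esat2 Y Z (fst p)) S))"

lemma esat2_same: "esat2 Z Z c = esat Z c" by (cases c) auto
lemma wsum2_same: "wsum2 Z Z S = wsum Z S"
  unfolding wsum2_def wsum_def by (simp add: esat2_same)

lemma elem_red: "fsat Y (freduct Z (elem_form c)) = esat2 Y Z c"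
  by (cases c) (auto simp: elem_form_def)

lemma sum_filter_set:
  "sum_list (map snd (filter P S)) = (\<Sum>i\<in>{i. i < length S \<and> P (S!i)}. snd (S!i))"
proof -
  have "S = map (nth S) [0..<length S]" by (simp add: map_nth)
  then have "filter P S = map (nth S) (filter (P \<circ> nth S) [0..<length S])"
    by (metis filter_map)
  then have "sum_list (map snd (filter P S)) = sum_list (map (\<lambda>i. snd (S!i)) (filter (P \<circ> nth S) [0..<length S]))"
    by (simp add: comp_def)
  also have "\<dots> = (\<Sum>i\<in>set (filter (P \<circ> nth S) [0..<length S]). snd (S!i))"
    by (rule sum_list_distinct_conv_sum_set) simp
  also have "set (filter (P \<circ> nth S) [0..<length S]) = {i. i < length S \<and> P (S!i)}" by auto
  finally show ?thesis .
qed

lemma angle_lemma: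
  assumes nn: "\<forall>p\<in>set S. 0 \<le> snd p"
    and up: "\<And>a b. a \<le> b \<Longrightarrow> R a \<Longrightarrow> R b"
  shows "fsat Y (freduct Z (angle (map (elem_form \<circ> fst) S)
            (filter (\<lambda>I. R (\<Sum>i\<leftarrow>I. snd (S ! i))) (index_subsets (length S)))))
         \<longleftrightarrow> R (wsum2 Y Z S)"
proof -
  let ?P = "\<lambda>i. esat2 Y Z (fst (S!i))"
  let ?A = "{i. i < length S \<and> ?P i}"
  have ws: "wsum2 Y Z S = (\<Sum>i\<in>?A. snd (S!i))"
    unfolding wsum2_def by (rule sum_filter_set)
  have lhs0: "fsat Y (freduct Z (angle (map (elem_form \<circ> fst) S)
            (filter (\<lambda>I. R (\<Sum>i\<leftarrow>I. snd (S ! i))) (index_subsets (length S)))))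
     \<longleftrightarrow> (\<exists>I. subseq I [0..<length S] \<and> R (\<Sum>i\<leftarrow>I. snd (S ! i)) \<and> (\<forall>i\<in>set I. fsat Y (freduct Z (map (elem_form \<circ> fst) S ! i))))"
    unfolding angle_def index_subsets_def
    by (simp add: disj_list_red conj_list_red disj_list_sat conj_list_sat)
  have inr: "subseq I [0..<length S] \<Longrightarrow> i \<in> set I \<Longrightarrow> i < length S" for I i
    by (metis atLeastLessThan_iff set_upt in_set_subseqs subseqs_powset image_eqI PowD subsetD) 
  have lhs: "fsat Y (freduct Z (angle (map (elem_form \<circ> fst) S)
            (filter (\<lambda>I. R (\<Sum>i\<leftarrow>I. snd (S ! i))) (index_subsets (length S)))))
     \<longleftrightarrow> (\<exists>I. subseq I [0..<length S] \<and> R (\<Sum>i\<leftarrow>I. snd (S ! i)) \<and> (\<forall>i\<in>set I. ?P i))"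
    unfolding lhs0 using inr by (auto simp: elem_red)
  show ?thesis
    unfolding lhs ws
  proof
    assume "\<exists>I. subseq I [0..<length S] \<and> R (\<Sum>i\<leftarrow>I. snd (S ! i)) \<and> (\<forall>i\<in>set I. ?P i)"
    then obtain I where I: "subseq I [0..<length S]" "R (\<Sum>i\<leftarrow>I. snd (S ! i))" "\<forall>i\<in>set I. ?P i" by blast
    have d: "distinct I" using I(1) subseqs_distinctD by (metis distinct_upt in_set_subseqs)
    have "(\<Sum>i\<leftarrow>I. snd (S ! i)) = (\<Sum>i\<in>set I. snd (S!i))"
      using d by (rule sum_list_distinct_conv_sum_set)
    also have "\<dots> \<le> (\<Sum>i\<in>?A. snd (S!i))"
      apply (rule sum_mono2)
      using I inr nn by auto
    finally show "R (\<Sum>i\<in>?A. snd (S!i))" using I(2) up by blast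
  next
    assume r: "R (\<Sum>i\<in>?A. snd (S!i))"
    let ?I = "filter ?P [0..<length S]"
    have "(\<Sum>i\<leftarrow>?I. snd (S ! i)) = (\<Sum>i\<in>set ?I. snd (S!i))"
      by (rule sum_list_distinct_conv_sum_set) simp
    also have "set ?I = ?A" by auto
    finally show "\<exists>I. subseq I [0..<length S] \<and> R (\<Sum>i\<leftarrow>I. snd (S ! i)) \<and> (\<forall>i\<in>set I. ?P i)"
      using r by (intro exI[of _ ?I]) auto
  qed
qed

lemma tr_ge_red:
  assumes "\<forall>p\<in>set S. 0 \<le> snd p"
  shows "fsat Y (freduct Z (tr_ge w S)) \<longleftrightarrow> w \<le> ereal (wsum2 Y Z S)"
  unfolding tr_ge_def
  by (rule angle_lemma[OF assms]) (meson ereal_less_eq(3) order_trans)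

lemma tr_gt_red:
  assumes "\<forall>p\<in>set S. 0 \<le> snd p"
  shows "fsat Y (freduct Z (tr_gt w S)) \<longleftrightarrow> w < ereal (wsum2 Y Z S)"
  unfolding tr_gt_def
  by (rule angle_lemma[OF assms]) (meson ereal_less_eq(3) less_le_trans)

lemma tr_wc_red:
  assumes "wc_wf C"
  shows "fsat Y (freduct Z (tr_wc C)) \<longleftrightarrow>
     lower C \<le> ereal (wsum2 Y Z (elems C)) \<and> ereal (wsum Z (elems C)) \<le> upper C"
proof -
  have nn: "\<forall>p\<in>set (elems C). 0 \<le> snd p" using assms by (simp add: wc_wf_def)
  have "fsat Z (tr_gt (upper C) (elems C)) \<longleftrightarrow> upper C < ereal (wsum Z (elems C))"
    using tr_gt_red[OF nn, of Z Z] by (simp add: fsat_red wsum2_same)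
  then show ?thesis unfolding tr_wc_def
    by (simp add: tr_ge_red[OF nn]) (meson not_less)
qed

lemma wsum2_split:
  "wsum2 Y Z S = sum_list (map snd (filter (\<lambda>p. is_pos_elem (fst p) \<and> elem_lit (fst p) \<in> Y) S))
     + sum_list (map snd (filter (\<lambda>p. \<not> is_pos_elem (fst p) \<and> esat Z (fst p)) S))"
  unfolding wsum2_def
proof (induction S)
  case Nil then show ?case by simp
next
  case (Cons p S)
  obtain c w where p: "p = (c, w)" by force
  show ?case using Cons by (cases c) (auto simp: p)
qed

lemma pos_map_sum:
  "sum_list (map snd (filter (\<lambda>p. fst p \<in> Y) (map (\<lambda>p. (elem_lit (fst p), snd p)) (filter (\<lambda>p. is_pos_elem (fst p)) S))))
   = sum_list (map snd (filter (\<lambda>p. is_pos_elem (fst p) \<and> elem_lit (fst p) \<in> Y) S))"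
  by (induction S) auto

lemma ereal_minus_le: "(L::ereal) - ereal r \<le> ereal s \<longleftrightarrow> L \<le> ereal (s + r)"
  by (cases L) auto

lemma lcsat_red: "lcsat Y (lc_reduct Z C) \<longleftrightarrow> lower C \<le> ereal (wsum2 Y Z (elems C))"
  unfolding lcsat_def lc_reduct_def
  by (simp only: fst_conv snd_conv pos_map_sum ereal_minus_le wsum2_split)

lemma wsum2_mono:
  assumes "Y \<subseteq> Y'" "\<forall>p\<in>set S. 0 \<le> snd p"
  shows "wsum2 Y Z S \<le> wsum2 Y' Z S"
  using assms(2) unfolding wsum2_def
proof (induction S)
  case Nil then show ?case by simp
next
  case (Cons p S)
  obtain c w where p: "p = (c, w)" by force
  show ?case using Cons assms(1) by (cases c) (auto simp: p)
qed

lemma NS_char: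
  assumes "wprog_wf \<Omega>"
  shows "nsat Y (nreduct (translate \<Omega>) Z) \<longleftrightarrow>
    (\<forall>(C0, Cs)\<in>\<Omega>. (\<forall>C\<in>set Cs. lower C \<le> ereal (wsum2 Y Z (elems C)) \<and> ereal (wsum Z (elems C)) \<le> upper C) \<longrightarrow>
       ((\<forall>l\<in>set (pos_lits C0). l \<in> Z \<longrightarrow> l \<in> Y) \<and> lower C0 \<le> ereal (wsum2 Y Z (elems C0)) \<and> ereal (wsum Z (elems C0)) \<le> upper C0))"
  (is "_ \<longleftrightarrow> ?rhs")
proof -
  have "fsat Y (freduct Z (fst (tr_rule (C0, Cs)))) \<longleftrightarrow>
       ((\<forall>l\<in>set (pos_lits C0). l \<in> Z \<longrightarrow> l \<in> Y) \<and> lower C0 \<le> ereal (wsum2 Y Z (elems C0)) \<and> ereal (wsum Z (elems C0)) \<le> upper C0)"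
    "fsat Y (freduct Z (snd (tr_rule (C0, Cs)))) \<longleftrightarrow>
       (\<forall>C\<in>set Cs. lower C \<le> ereal (wsum2 Y Z (elems C)) \<and> ereal (wsum Z (elems C)) \<le> upper C)"
    if "(C0, Cs) \<in> \<Omega>" for C0 Cs
    using that assms unfolding wprog_wf_def tr_rule_def
    by (auto simp: conj_list_red conj_list_sat tr_wc_red)
  note fs = this
  have "nsat Y (nreduct (translate \<Omega>) Z) \<longleftrightarrow> (\<forall>r\<in>\<Omega>. fsat Y (freduct Z (snd (tr_rule r))) \<longrightarrow> fsat Y (freduct Z (fst (tr_rule r))))"
    unfolding nsat_def nreduct_def translate_def by (auto simp: case_prod_beta)
  also have "\<dots> \<longleftrightarrow> ?rhs"
    apply (rule ball_cong[OF refl])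
    subgoal for r by (cases r) (simp only: fs prod.case)
    done
  finally show ?thesis .
qed

lemma R_char:
  "rsat Y (wreduct \<Omega> Z) \<longleftrightarrow>
    (\<forall>(C0, Cs)\<in>\<Omega>. (\<forall>C\<in>set Cs. ereal (wsum Z (elems C)) \<le> upper C) \<longrightarrow>
       (\<forall>C\<in>set Cs. lower C \<le> ereal (wsum2 Y Z (elems C))) \<longrightarrow>
       (\<forall>l\<in>set (pos_lits C0). l \<in> Z \<longrightarrow> l \<in> Y))"
  unfolding rsat_def wreduct_def
  by (auto simp: lcsat_red split: if_splits)


lemma wf_nn:
  assumes "wprog_wf \<Omega>" "(C0, Cs) \<in> \<Omega>" "C \<in> set Cs"
  shows "\<forall>p\<in>set (elems C). 0 \<le> snd p"
proof -
  have "\<forall>C\<in>set Cs. wc_wf C" using assms(1,2) unfolding wprog_wf_def by fast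
  then show ?thesis using assms(3) unfolding wc_wf_def by blast
qed

lemma cl_sat:
  assumes wf: "wprog_wf \<Omega>"
  shows "rsat (cl (wreduct \<Omega> Z)) (wreduct \<Omega> Z)"
  unfolding R_char
proof (intro ballI)
  fix r0 assume r0: "r0 \<in> \<Omega>"
  obtain C0 Cs where r0e: "r0 = (C0, Cs)" by force
  have key: "l \<in> cl (wreduct \<Omega> Z)"
    if r: "(C0, Cs) \<in> \<Omega>" and up: "\<forall>C\<in>set Cs. ereal (wsum Z (elems C)) \<le> upper C"
    and lo: "\<forall>C\<in>set Cs. lower C \<le> ereal (wsum2 (cl (wreduct \<Omega> Z)) Z (elems C))"
    and l: "l \<in> set (pos_lits C0)" "l \<in> Z" for l
    unfolding cl_def
  proof
    fix X assume "X \<in> {X. rsat X (wreduct \<Omega> Z)}"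
    then have X: "rsat X (wreduct \<Omega> Z)" by simp
    have sub: "cl (wreduct \<Omega> Z) \<subseteq> X" unfolding cl_def using X by blast
    have "\<forall>C\<in>set Cs. lower C \<le> ereal (wsum2 X Z (elems C))"
    proof
      fix C assume C: "C \<in> set Cs"
      have nn: "\<forall>p\<in>set (elems C). 0 \<le> snd p" using wf_nn[OF wf r C] .
      have "lower C \<le> ereal (wsum2 (cl (wreduct \<Omega> Z)) Z (elems C))" using lo C by blast
      also have "\<dots> \<le> ereal (wsum2 X Z (elems C))" using wsum2_mono[OF sub nn] by simp
      finally show "lower C \<le> ereal (wsum2 X Z (elems C))" .
    qed
    then show "l \<in> X" using X[unfolded R_char] r up l by blast
  qed
  show "case r0 of (C0, Cs) \<Rightarrow> (\<forall>C\<in>set Cs. ereal (wsum Z (elems C)) \<le> upper C) \<longrightarrow>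
       (\<forall>C\<in>set Cs. lower C \<le> ereal (wsum2 (cl (wreduct \<Omega> Z)) Z (elems C))) \<longrightarrow>
       (\<forall>l\<in>set (pos_lits C0). l \<in> Z \<longrightarrow> l \<in> cl (wreduct \<Omega> Z))"
    using key r0 unfolding r0e by auto
qed

lemma cl_least: "rsat X R \<Longrightarrow> cl R \<subseteq> X"
  unfolding cl_def by blast

lemma consistent_sub: "consistent Z \<Longrightarrow> Y \<subseteq> Z \<Longrightarrow> consistent Y"
  unfolding consistent_def by blast

lemma wsat_NS:
  assumes "wprog_wf \<Omega>"
  shows "wsat Z \<Omega> \<longleftrightarrow> nsat Z (nreduct (translate \<Omega>) Z)"
  unfolding NS_char[OF assms] wsat_def wcsat_def wsum2_same by blast

lemma pos_in_pos_lits: "(PosE l, w) \<in> set (elems C) \<Longrightarrow> l \<in> set (pos_lits C)"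
  unfolding pos_lits_def by force

lemma wsum2_eq:
  assumes "\<forall>p\<in>set S. esat2 Y Z (fst p) = esat2 Z Z (fst p)"
  shows "wsum2 Y Z S = wsum2 Z Z S"
  unfolding wsum2_def using assms by (metis (mono_tags, lifting) filter_cong)

theorem theorem1:
  fixes \<Omega> :: "'a wprog" and Z :: "'a lit set"
  assumes "wprog_wf \<Omega>"
  shows "weight_answer_set \<Omega> Z \<longleftrightarrow> nested_answer_set (translate \<Omega>) Z"
proof
  assume "weight_answer_set \<Omega> Z"
  then have c: "consistent Z" and ws: "wsat Z \<Omega>" and clZ: "cl (wreduct \<Omega> Z) = Z"
    unfolding weight_answer_set_def by auto
  have ns: "nsat Z (nreduct (translate \<Omega>) Z)" using ws wsat_NS[OF assms] by blast
  have "\<not> nsat Y (nreduct (translate \<Omega>) Z)" if Y: "Y \<subset> Z" for Y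
  proof
    assume nY: "nsat Y (nreduct (translate \<Omega>) Z)"
    have "rsat Y (wreduct \<Omega> Z)"
      using nY unfolding NS_char[OF assms] R_char by fast
    then have "Z \<subseteq> Y" using cl_least clZ by blast
    then show False using Y by blast
  qed
  then show "nested_answer_set (translate \<Omega>) Z"
    unfolding nested_answer_set_def using c ns by blast
next
  assume "nested_answer_set (translate \<Omega>) Z"
  then have c: "consistent Z" and ns: "nsat Z (nreduct (translate \<Omega>) Z)"
    and mini: "\<And>Y. Y \<subset> Z \<Longrightarrow> consistent Y \<Longrightarrow> \<not> nsat Y (nreduct (translate \<Omega>) Z)"
    unfolding nested_answer_set_def by auto
  have ws: "wsat Z \<Omega>" using ns wsat_NS[OF assms] by blast
  define Y where "Y = cl (wreduct \<Omega> Z)"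
  have "rsat Z (wreduct \<Omega> Z)" unfolding R_char by blast
  then have YZ: "Y \<subseteq> Z" unfolding Y_def by (rule cl_least)
  have rY: "rsat Y (wreduct \<Omega> Z)" unfolding Y_def by (rule cl_sat[OF assms])
  have "nsat Y (nreduct (translate \<Omega>) Z)"
  proof -
    have key: "(\<forall>l\<in>set (pos_lits C0). l \<in> Z \<longrightarrow> l \<in> Y) \<and>
       lower C0 \<le> ereal (wsum2 Y Z (elems C0)) \<and> ereal (wsum Z (elems C0)) \<le> upper C0"
     if r: "(C0, Cs) \<in> \<Omega>"
      and b: "\<forall>C\<in>set Cs. lower C \<le> ereal (wsum2 Y Z (elems C)) \<and> ereal (wsum Z (elems C)) \<le> upper C" for C0 Cs
    proof -
    have pos: "\<forall>l\<in>set (pos_lits C0). l \<in> Z \<longrightarrow> l \<in> Y"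
      using rY[unfolded R_char] r b by blast
    have "\<forall>C\<in>set Cs. wcsat Z C"
    proof
      fix C assume C: "C \<in> set Cs"
      have nn: "\<forall>p\<in>set (elems C). 0 \<le> snd p" using wf_nn[OF assms r C] .
      have "lower C \<le> ereal (wsum2 Y Z (elems C))" using b C by blast
      also have "\<dots> \<le> ereal (wsum2 Z Z (elems C))" using wsum2_mono[OF YZ nn] by simp
      finally show "wcsat Z C" using b C unfolding wcsat_def wsum2_same by blast
    qed
    then have w0: "wcsat Z C0" using ws r unfolding wsat_def by blast
    have "\<forall>p\<in>set (elems C0). esat2 Y Z (fst p) = esat2 Z Z (fst p)"
    proof
      fix p assume p: "p \<in> set (elems C0)"
      obtain c w where pw: "p = (c, w)" by force
      show "esat2 Y Z (fst p) = esat2 Z Z (fst p)"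
      proof (cases c)
        case (PosE l)
        then have "l \<in> set (pos_lits C0)" using p pw pos_in_pos_lits by metis
        then show ?thesis using pos YZ PosE pw by auto
      qed (simp add: pw)
    qed
    then have "wsum2 Y Z (elems C0) = wsum Z (elems C0)" using wsum2_eq wsum2_same by metis
    then show "(\<forall>l\<in>set (pos_lits C0). l \<in> Z \<longrightarrow> l \<in> Y) \<and>
       lower C0 \<le> ereal (wsum2 Y Z (elems C0)) \<and> ereal (wsum Z (elems C0)) \<le> upper C0"
      using pos w0 unfolding wcsat_def by simp
  qed
  then show ?thesis unfolding NS_char[OF assms] by auto
  qed
  then have "Y = Z" using mini[of Y] YZ consistent_sub[OF c YZ] by blast
  then show "weight_answer_set \<Omega> Z"
    unfolding weight_answer_set_def Y_def using c ws by simp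
qed

end
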